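(* Let $p$ be an odd prime and $n = 2p$. Then the total graph $T(\Gamma(\mathbb{Z}_n))$ is not very cost effective.
   Context: $\mathbb{Z}_n$ is the ring of residue classes modulo $n$. The zero-divisor graph $\Gamma(\mathbb{Z}_n)$ has as vertices the nonzero zero-divisors of $\mathbb{Z}_n$, two distinct vertices being adjacent iff their product is $0$. The total graph $T(G)$ of a graph $G$ has vertex set $V(G)\cup E(G)$, with two vertices adjacent iff they are adjacent vertices of $G$, adjacent edges of $G$ (sharing an endpoint), or a vertex and an edge of $G$ incident to each other. For a graph $H=(V,E)$ and $S\subseteq V$, a vertex $v\in S$ is very cost effective if $|N(v)\cap S| < |N(v)\cap (V\setminus S)|$; $S$ is very cost effective if every vertex of $S$ is. A bipartition $\{S, V\setminus S\}$ is very cost effective if both parts are very cost effective, and $H$ is very cost effective if it has a very cost effective bipartition. *)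

theory Defs
  imports Main "HOL-Computational_Algebra.Primes"
begin

text \<open>Zero-divisor graph of Z_n: residues represented by 0..n-1.
  Vertices: nonzero zero-divisors; edges: 2-element sets {x,y}, x \<noteq> y, x*y = 0 in Z_n.\<close>

definition zd_verts :: "nat \<Rightarrow> nat set" where
  "zd_verts n = {x. 0 < x \<and> x < n \<and> (\<exists>y. 0 < y \<and> y < n \<and> (x * y) mod n = 0)}"

definition zd_edges :: "nat \<Rightarrow> nat set set" where
  "zd_edges n = {{x, y} | x y. x \<in> zd_verts n \<and> y \<in> zd_verts n \<and> x \<noteq> y \<and> (x * y) mod n = 0}"

text \<open>Total graph of a simple graph (V, E), E a set of 2-element subsets of V.
  Vertices: Inl v for v \<in> V, Inr e for e \<in> E.\<close>

definition total_verts :: "'a set \<Rightarrow> 'a set set \<Rightarrow> ('a + 'a set) set" where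
  "total_verts V E = Inl ` V \<union> Inr ` E"

fun total_rel :: "'a set set \<Rightarrow> ('a + 'a set) \<Rightarrow> ('a + 'a set) \<Rightarrow> bool" where
  "total_rel E (Inl u) (Inl v) = ({u, v} \<in> E)"
| "total_rel E (Inr e) (Inr f) = (e \<inter> f \<noteq> {})"
| "total_rel E (Inl u) (Inr e) = (u \<in> e)"
| "total_rel E (Inr e) (Inl u) = (u \<in> e)"

definition total_adj :: "'a set \<Rightarrow> 'a set set \<Rightarrow> ('a + 'a set) \<Rightarrow> ('a + 'a set) \<Rightarrow> bool" where
  "total_adj V E a b = (a \<in> total_verts V E \<and> b \<in> total_verts V E \<and> a \<noteq> b \<and> total_rel E a b)"

definition nbhd :: "'b set \<Rightarrow> ('b \<Rightarrow> 'b \<Rightarrow> bool) \<Rightarrow> 'b \<Rightarrow> 'b set" where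
  "nbhd W adj v = {w \<in> W. adj v w}"

definition very_cost_effective_set :: "'b set \<Rightarrow> ('b \<Rightarrow> 'b \<Rightarrow> bool) \<Rightarrow> 'b set \<Rightarrow> bool" where
  "very_cost_effective_set W adj S =
     (\<forall>v \<in> S. card (nbhd W adj v \<inter> S) < card (nbhd W adj v \<inter> (W - S)))"

definition very_cost_effective_graph :: "'b set \<Rightarrow> ('b \<Rightarrow> 'b \<Rightarrow> bool) \<Rightarrow> bool" where
  "very_cost_effective_graph W adj =
     (\<exists>S. S \<subseteq> W \<and> S \<noteq> {} \<and> W - S \<noteq> {} \<and>
          very_cost_effective_set W adj S \<and> very_cost_effective_set W adj (W - S))"

end

theory Submission
  imports Defs
begin

lemma mult_p_eq:
  fixes p k x :: nat
  assumes "x = p*k" "0 < x" "x < 2*p"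
  shows "x = p"
proof -
  have "k \<noteq> 0" using assms by auto
  moreover have "p*k < p*2" using assms by (simp add: mult.commute)
  hence "k < 2" by simp
  ultimately have "k = 1" by linarith
  thus ?thesis using assms by simp
qed

lemma V_char:
  fixes p :: nat
  assumes pr: "prime p" and od: "odd p"
  shows "x \<in> zd_verts (2*p) \<longleftrightarrow> 0 < x \<and> x < 2*p \<and> (even x \<or> x = p)"
proof
  assume "x \<in> zd_verts (2*p)"
  then obtain y where x: "0 < x" "x < 2*p" and y: "0 < y" "y < 2*p" and d0: "(x*y) mod (2*p) = 0"
    by (auto simp: zd_verts_def)
  have d: "2*p dvd x*y" using d0 by (simp add: mod_eq_0_iff_dvd)
  hence "p dvd x*y" by (meson dvd_trans dvd_triv_right)
  hence "p dvd x \<or> p dvd y" using pr by (simp add: prime_dvd_mult_iff)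
  thus "0 < x \<and> x < 2*p \<and> (even x \<or> x = p)"
  proof
    assume "p dvd x"
    then obtain k where "x = p*k" by (auto elim: dvdE)
    with x have "x = p" by (intro mult_p_eq[of x p k]) auto
    with x show ?thesis by simp
  next
    assume "p dvd y"
    then obtain k where "y = p*k" by (auto elim: dvdE)
    with y have "y = p" by (intro mult_p_eq[of y p k]) auto
    with d have "2*p dvd x*p" by simp
    hence "2 dvd x" using prime_gt_0_nat[OF pr] by simp
    with x show ?thesis by simp
  qed
next
  assume h: "0 < x \<and> x < 2*p \<and> (even x \<or> x = p)"
  have p0: "p > 0" using pr prime_gt_0_nat by blast
  show "x \<in> zd_verts (2*p)"
  proof (cases "x = p")
    case True
    then show ?thesis using h p0 prime_gt_1_nat[OF pr] unfolding zd_verts_def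
      by (auto intro!: exI[of _ 2])
  next
    case False
    then obtain k where "x = 2*k" using h by (auto elim: evenE)
    hence "(x*p) mod (2*p) = 0" by simp
    then show ?thesis using h p0 unfolding zd_verts_def
      by (auto intro!: exI[of _ p])
  qed
qed

lemma E_char:
  fixes p :: nat
  assumes pr: "prime p" and od: "odd p"
  shows "e \<in> zd_edges (2*p) \<longleftrightarrow> (\<exists>l. l \<in> zd_verts (2*p) \<and> l \<noteq> p \<and> e = {p, l})"
proof
  assume "e \<in> zd_edges (2*p)"
  then obtain x y where e: "e = {x,y}" and xy: "x \<in> zd_verts (2*p)" "y \<in> zd_verts (2*p)" "x \<noteq> y"
    and d0: "(x*y) mod (2*p) = 0" by (auto simp: zd_edges_def)
  have "2*p dvd x*y" using d0 by (simp add: mod_eq_0_iff_dvd)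
  hence "p dvd x*y" by (meson dvd_trans dvd_triv_right)
  hence pd: "p dvd x \<or> p dvd y" using pr by (simp add: prime_dvd_mult_iff)
  have cx: "x = p \<or> \<not> p dvd x"
  proof -
    have "0 < x" "x < 2*p" using xy(1) V_char[OF pr od] by auto
    moreover have "even x \<or> x = p" using xy(1) V_char[OF pr od] by auto
    ultimately show ?thesis
    proof (cases "p dvd x")
      case True
      then obtain k where "x = p*k" by (auto elim: dvdE)
      with \<open>0<x\<close> \<open>x<2*p\<close> have "x = p" by (intro mult_p_eq[of x p k]) auto
      then show ?thesis by simp
    qed simp
  qed
  have cy: "y = p \<or> \<not> p dvd y"
  proof -
    have "0 < y" "y < 2*p" using xy(2) V_char[OF pr od] by auto
    show ?thesis
    proof (cases "p dvd y")
      case True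
      then obtain k where "y = p*k" by (auto elim: dvdE)
      with \<open>0<y\<close> \<open>y<2*p\<close> have "y = p" by (intro mult_p_eq[of y p k]) auto
      then show ?thesis by simp
    qed simp
  qed
  have "x = p \<or> y = p" using pd cx cy by auto
  thus "\<exists>l. l \<in> zd_verts (2*p) \<and> l \<noteq> p \<and> e = {p, l}"
    using e xy by (auto simp: insert_commute)
next
  assume "\<exists>l. l \<in> zd_verts (2*p) \<and> l \<noteq> p \<and> e = {p, l}"
  then obtain l where l: "l \<in> zd_verts (2*p)" "l \<noteq> p" "e = {p,l}" by blast
  have "even l" using l V_char[OF pr od] by auto
  then obtain k where k: "l = 2*k" by (auto elim: evenE)
  have pl: "p*l = (2*p)*k" using k by simp
  have m0: "(p*l) mod (2*p) = 0" unfolding pl by (rule mod_mult_self1_is_0)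
  have pV: "p \<in> zd_verts (2*p)" using V_char[OF pr od] prime_gt_0_nat[OF pr] by auto
  have ex: "\<exists>x y. e = {x,y} \<and> x \<in> zd_verts (2*p) \<and> y \<in> zd_verts (2*p) \<and> x \<noteq> y \<and> (x*y) mod (2*p) = 0"
    apply (rule exI[of _ p], rule exI[of _ l])
    using l(3) pV l(1) l(2) m0 by simp
  show "e \<in> zd_edges (2*p)" unfolding zd_edges_def using ex by (simp only: mem_Collect_eq)
qed

lemma star_side:
  fixes c :: 'a
  assumes fin: "finite V" and cV: "c \<in> V" and Edef: "E = (\<lambda>l. {c,l}) ` (V - {c})"
  and TW: "T \<subseteq> total_verts V E" and cT: "Inl c \<in> T"
  and v1: "very_cost_effective_set (total_verts V E) (total_adj V E) T"
  and v2: "very_cost_effective_set (total_verts V E) (total_adj V E) (total_verts V E - T)"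
  shows False
proof -
  define W where "W = total_verts V E"
  define A where "A = total_adj V E"
  define L where "L = V - {c}"
  have finW: "finite W" unfolding W_def total_verts_def Edef using fin by simp
  have cW: "Inl c \<in> W" using cV by (simp add: W_def total_verts_def)
  have eW: "l \<in> L \<Longrightarrow> Inr {c,l} \<in> W" for l by (auto simp: W_def total_verts_def Edef L_def)
  have lW: "l \<in> L \<Longrightarrow> Inl l \<in> W" for l by (auto simp: W_def total_verts_def L_def)
  have Nl: "nbhd W A (Inl l) = {Inl c, Inr {c,l}}" if l: "l \<in> L" for l
  proof
    show "nbhd W A (Inl l) \<subseteq> {Inl c, Inr {c,l}}"
    proof
      fix w assume w: "w \<in> nbhd W A (Inl l)"
      hence wW: "w \<in> W" and ne: "w \<noteq> Inl l" and r: "total_rel E (Inl l) w"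
        by (auto simp: nbhd_def A_def total_adj_def W_def)
      show "w \<in> {Inl c, Inr {c,l}}"
      proof (cases w)
        case (Inl u)
        with r obtain l' where "l' \<in> L" "{l,u} = {c,l'}" by (auto simp: Edef L_def)
        with Inl ne l show ?thesis by (auto simp: L_def doubleton_eq_iff)
      next
        case (Inr e)
        with r wW obtain l' where "l' \<in> L" "e = {c,l'}" "l \<in> e" by (auto simp: Edef L_def W_def total_verts_def)
        with Inr l show ?thesis by (auto simp: L_def)
      qed
    qed
  next
    show "{Inl c, Inr {c,l}} \<subseteq> nbhd W A (Inl l)"
      using l cV by (auto simp: nbhd_def A_def total_adj_def W_def total_verts_def Edef L_def)
  qed
  have Nc1: "nbhd W A (Inl c) \<subseteq> Inl ` L \<union> Inr ` E"
    by (auto simp: nbhd_def A_def total_adj_def W_def total_verts_def L_def)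
  have Nc2: "Inr ` E \<subseteq> nbhd W A (Inl c)"
    using cV by (auto simp: nbhd_def A_def total_adj_def W_def total_verts_def Edef L_def)
  have WWT: "W - (W - T) = T" using TW W_def by auto
  have s1: "Inl l \<notin> T" if l: "l \<in> L" for l
  proof
    assume lT: "Inl l \<in> T"
    have finN: "finite (nbhd W A (Inl l))" by (simp add: Nl[OF l])
    have lt: "card (nbhd W A (Inl l) \<inter> T) < card (nbhd W A (Inl l) \<inter> (W - T))"
      using v1 lT unfolding very_cost_effective_set_def W_def A_def by blast
    have sub1: "nbhd W A (Inl l) \<inter> (W - T) \<subseteq> {Inr {c,l}}" using Nl[OF l] cT by auto
    have le1: "card (nbhd W A (Inl l) \<inter> (W - T)) \<le> 1"
      using card_mono[OF _ sub1] by simp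
    have sub2: "{Inl c} \<subseteq> nbhd W A (Inl l) \<inter> T" using Nl[OF l] cT by auto
    have "card {Inl c} \<le> card (nbhd W A (Inl l) \<inter> T)"
      using card_mono[OF _ sub2] finN by simp
    hence ge1: "card (nbhd W A (Inl l) \<inter> T) \<ge> 1" by simp
    show False using lt le1 ge1 by linarith
  qed
  have s2: "Inr {c,l} \<in> T" if l: "l \<in> L" for l
  proof (rule ccontr)
    assume nT: "Inr {c,l} \<notin> T"
    have lWT: "Inl l \<in> W - T" using s1[OF l] lW[OF l] by auto
    have "card (nbhd W A (Inl l) \<inter> (W - T)) < card (nbhd W A (Inl l) \<inter> (W - (W - T)))"
      using v2 lWT unfolding very_cost_effective_set_def W_def A_def by blast
    moreover have "nbhd W A (Inl l) \<inter> (W - (W - T)) = {Inl c}" using Nl[OF l] cT nT WWT by auto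
    moreover have "nbhd W A (Inl l) \<inter> (W - T) = {Inr {c,l}}" using Nl[OF l] cT nT eW[OF l] by auto
    ultimately show False by simp
  qed
  have lt: "card (nbhd W A (Inl c) \<inter> T) < card (nbhd W A (Inl c) \<inter> (W - T))"
    using v1 cT unfolding very_cost_effective_set_def W_def A_def by blast
  have sa: "nbhd W A (Inl c) \<inter> (W - T) \<subseteq> Inl ` L"
    using Nc1 s2 by (auto simp: Edef L_def)
  have c1: "card (nbhd W A (Inl c) \<inter> (W - T)) \<le> card (Inl ` L :: ('a + 'a set) set)"
    by (rule card_mono[OF _ sa]) (simp add: L_def fin)
  have c2: "card (Inl ` L :: ('a + 'a set) set) = card L" by (simp add: card_image)
  have ij: "inj_on (\<lambda>l. Inr {c,l} :: 'a + 'a set) L"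
    by (auto simp: inj_on_def L_def doubleton_eq_iff)
  have c3: "card ((\<lambda>l. Inr {c,l} :: 'a + 'a set) ` L) = card L" using ij by (simp add: card_image)
  have sb: "(\<lambda>l. Inr {c,l} :: 'a + 'a set) ` L \<subseteq> nbhd W A (Inl c) \<inter> T"
    using Nc2 s2 by (auto simp: Edef L_def)
  have c4: "card ((\<lambda>l. Inr {c,l} :: 'a + 'a set) ` L) \<le> card (nbhd W A (Inl c) \<inter> T)"
    by (rule card_mono[OF _ sb]) (simp add: finW nbhd_def)
  show False using lt c1 c2 c3 c4 by linarith
qed

lemma star_not_vce:
  fixes c :: 'a
  assumes fin: "finite V" and cV: "c \<in> V" and Edef: "E = (\<lambda>l. {c,l}) ` (V - {c})"
  shows "\<not> very_cost_effective_graph (total_verts V E) (total_adj V E)"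
proof
  assume "very_cost_effective_graph (total_verts V E) (total_adj V E)"
  then obtain S where S: "S \<subseteq> total_verts V E"
    and v1: "very_cost_effective_set (total_verts V E) (total_adj V E) S"
    and v2: "very_cost_effective_set (total_verts V E) (total_adj V E) (total_verts V E - S)"
    unfolding very_cost_effective_graph_def by blast
  have cW: "Inl c \<in> total_verts V E" using cV by (simp add: total_verts_def)
  show False
  proof (cases "Inl c \<in> S")
    case True
    then show ?thesis using star_side[OF fin cV Edef S True v1 v2] by blast
  next
    case False
    have eq: "total_verts V E - (total_verts V E - S) = S" using S by auto
    have v1': "very_cost_effective_set (total_verts V E) (total_adj V E) (total_verts V E - (total_verts V E - S))"
      using v1 eq by simp
    have cin: "Inl c \<in> total_verts V E - S" using cW False by blast
    show ?thesis by (rule star_side[OF fin cV Edef Diff_subset cin v2 v1'])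
  qed
qed

theorem mainTheorem8:
  fixes p :: nat
  assumes "prime p" and "odd p"
  shows "\<not> very_cost_effective_graph
            (total_verts (zd_verts (2 * p)) (zd_edges (2 * p)))
            (total_adj (zd_verts (2 * p)) (zd_edges (2 * p)))"
proof -
  have fin: "finite (zd_verts (2*p))" by (rule finite_subset[of _ "{..<2*p}"]) (auto simp: zd_verts_def)
  have cV: "p \<in> zd_verts (2*p)" using V_char[OF assms] prime_gt_0_nat[OF assms(1)] by auto
  have E: "zd_edges (2*p) = (\<lambda>l. {p,l}) ` (zd_verts (2*p) - {p})"
  proof (rule set_eqI)
    fix e
    show "e \<in> zd_edges (2*p) \<longleftrightarrow> e \<in> (\<lambda>l. {p,l}) ` (zd_verts (2*p) - {p})"
      unfolding E_char[OF assms] by blast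
  qed
  show ?thesis by (rule star_not_vce[OF fin cV E])
qed

end
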